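(* Let $A$ be a central simple algebra of degree $n$ over a field $k$, and let $I\subset A$ be a left ideal of $k$-dimension $n$. Fix an integer $j$. Then the map $J\mapsto J^\circ I$ is a canonical bijection from the set of left ideals $J$ of $A$ with $I\subset J$ and $\dim_k J=nj$ onto the set of $k$-subspaces $W\subset I^\circ I$ with $\dim_k W=n-j$. (Its inverse is $W\mapsto{}^\circ(WA)$.)
   Context: For $I\subset A$: right annihilator $I^\circ=\{a\in A: Ia=0\}$, left annihilator ${}^\circ I=\{a\in A: aI=0\}$. Products of subspaces $UW$ denote the $k$-span of products $uw$. *)

theory Defs
  imports Complex_Main
begin

definition k_algebra :: "('k::field \<Rightarrow> 'a::ring_1 \<Rightarrow> 'a) \<Rightarrow> bool" where
  "k_algebra sc \<longleftrightarrow> vector_space sc \<and>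
     (\<forall>c x y. sc c (x * y) = sc c x * y) \<and> (\<forall>c x y. sc c (x * y) = x * sc c y)"

definition fin_dim_alg :: "('k::field \<Rightarrow> 'a::ring_1 \<Rightarrow> 'a) \<Rightarrow> bool" where
  "fin_dim_alg sc \<longleftrightarrow> (\<exists>B. finite B \<and> module.span sc B = UNIV)"

definition left_ideal :: "'a::ring_1 set \<Rightarrow> bool" where
  "left_ideal J \<longleftrightarrow> 0 \<in> J \<and> (\<forall>x\<in>J. \<forall>y\<in>J. x + y \<in> J) \<and> (\<forall>a x. x \<in> J \<longrightarrow> a * x \<in> J)"

definition two_sided_ideal :: "'a::ring_1 set \<Rightarrow> bool" where
  "two_sided_ideal J \<longleftrightarrow> left_ideal J \<and> (\<forall>a x. x \<in> J \<longrightarrow> x * a \<in> J)"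

definition central_alg :: "('k::field \<Rightarrow> 'a::ring_1 \<Rightarrow> 'a) \<Rightarrow> bool" where
  "central_alg sc \<longleftrightarrow> {z. \<forall>x. z * x = x * z} = range (\<lambda>c. sc c 1)"

text \<open>Simple: nonzero (automatic for ring_1, since 0 \<noteq> 1) and only trivial two-sided ideals.\<close>
definition simple_alg :: "'a::ring_1 itself \<Rightarrow> bool" where
  "simple_alg _ \<longleftrightarrow> (\<forall>J::'a set. two_sided_ideal J \<longrightarrow> J = {0} \<or> J = UNIV)"

definition csa_of_degree :: "('k::field \<Rightarrow> 'a::ring_1 \<Rightarrow> 'a) \<Rightarrow> nat \<Rightarrow> bool" where
  "csa_of_degree sc n \<longleftrightarrow> k_algebra sc \<and> fin_dim_alg sc \<and> central_alg sc \<and>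
     simple_alg TYPE('a) \<and> vector_space.dim sc (UNIV::'a set) = n ^ 2"

text \<open>Right annihilator I\<degree> and left annihilator \<degree>I.\<close>
definition rann :: "'a::ring_1 set \<Rightarrow> 'a set" where
  "rann I = {a. \<forall>x\<in>I. x * a = 0}"

definition lann :: "'a::ring_1 set \<Rightarrow> 'a set" where
  "lann I = {a. \<forall>x\<in>I. a * x = 0}"

definition sprod :: "('k::field \<Rightarrow> 'a::ring_1 \<Rightarrow> 'a) \<Rightarrow> 'a set \<Rightarrow> 'a set \<Rightarrow> 'a set" where
  "sprod sc U W = module.span sc {u * w | u w. u \<in> U \<and> w \<in> W}"

end

theory Submission
  imports Defs
begin

locale csa_ctx = finite_dimensional_vector_space sc Basis
  for sc :: "'k::field \<Rightarrow> 'a::ring_1 \<Rightarrow> 'a" and Basis :: "'a set" +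
  fixes n :: nat and I :: "'a set"
  assumes scL: "\<And>c x y. sc c (x * y) = sc c x * y"
    and scR: "\<And>c x y. sc c (x * y) = x * sc c y"
    and simple: "\<And>J::'a set. two_sided_ideal J \<Longrightarrow> J = {0} \<or> J = UNIV"
    and dimA: "dim (UNIV::'a set) = n^2"
    and LI: "left_ideal I" and dimI: "dim I = n"
begin

lemma hom_left: "module_hom sc sc (\<lambda>x. a * x)"
  unfolding module_hom_def module_hom_axioms_def
  using module_axioms by (simp add: distrib_left scR)

lemma hom_right: "module_hom sc sc (\<lambda>x. x * a)"
  unfolding module_hom_def module_hom_axioms_def
  using module_axioms by (simp add: distrib_right scL)

lemma sc_eq: "sc c x = sc c 1 * x"
  using scL[of c 1 x] by (simp only: mult_1_left)

lemma left_ideal_subspace: assumes "left_ideal J" shows "subspace J"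
  unfolding subspace_def
proof (intro conjI ballI allI)
  fix c x assume "x \<in> J"
  then have "sc c 1 * x \<in> J" using assms unfolding left_ideal_def by blast
  then show "sc c x \<in> J" by (subst sc_eq)
qed (use assms in \<open>auto simp: left_ideal_def\<close>)

lemma lann_left_ideal: "left_ideal (lann S)"
  unfolding left_ideal_def lann_def by (auto simp: distrib_right mult.assoc)

lemma subspace_lann: "subspace (lann S)"
  by (rule left_ideal_subspace[OF lann_left_ideal])

lemma subspace_rann: "subspace (rann S)"
  unfolding subspace_def rann_def
proof (intro conjI ballI allI)
  fix c x assume "x \<in> {a. \<forall>x\<in>S. x * a = 0}"
  show "sc c x \<in> {a. \<forall>x\<in>S. x * a = 0}"
    unfolding mem_Collect_eq
  proof
    fix y assume "y \<in> S"
    then have "y * x = 0" using \<open>x \<in> _\<close> by auto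
    have "y * sc c x = sc c (y * x)" by (rule scR[symmetric])
    also have "\<dots> = 0" using \<open>y * x = 0\<close> by simp
    finally show "y * sc c x = 0" .
  qed
qed (auto simp: distrib_left)

lemma I_sub: "subspace I"
  by (rule left_ideal_subspace[OF LI])

lemma I_mult: "x \<in> I \<Longrightarrow> a * x \<in> I"
  using LI unfolding left_ideal_def by blast

lemma lann_anti: "S \<subseteq> T \<Longrightarrow> lann T \<subseteq> lann S"
  unfolding lann_def by auto

lemma lann_span: "lann (span S) = lann S"
proof
  show "lann (span S) \<subseteq> lann S" by (rule lann_anti[OF span_superset])
  show "lann S \<subseteq> lann (span S)"
  proof
    fix a assume a: "a \<in> lann S"
    interpret h: module_hom sc sc "\<lambda>x. a * x" by (rule hom_left)
    have "span S \<subseteq> {x. a * x = 0}"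
      by (rule span_minimal) (use a h.subspace_kernel in \<open>auto simp: lann_def\<close>)
    then show "a \<in> lann (span S)" unfolding lann_def by auto
  qed
qed

lemma n_pos: "n > 0"
proof (rule ccontr)
  assume "\<not> n > 0"
  then have "dim (UNIV::'a set) = 0" using dimA by simp
  then have "(UNIV::'a set) \<subseteq> {0}" by (metis dim_eq_0)
  then have "(1::'a) = 0" by blast
  then show False by simp
qed

lemma lann_I: "lann I = {0}"
proof -
  have "two_sided_ideal (lann I)"
    unfolding two_sided_ideal_def using lann_left_ideal
    by (auto simp: lann_def mult.assoc I_mult)
  moreover have "lann I \<noteq> UNIV"
  proof
    assume "lann I = UNIV"
    then have "1 \<in> lann I" by simp
    then have "I \<subseteq> {0}" by (auto simp: lann_def)
    then have "dim I = 0" by simp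
    then show False using dimI n_pos by simp
  qed
  ultimately show ?thesis using simple by blast
qed

lemma RN:
  assumes V: "subspace V" and f: "module_hom sc sc f"
  shows "dim V = dim {x\<in>V. f x = 0} + dim (f ` V)"
proof -
  interpret f: module_hom sc sc f by fact
  interpret p: finite_dimensional_vector_space_pair_1 sc Basis sc by unfold_locales
  let ?K = "{x\<in>V. f x = 0}"
  have sK: "subspace ?K"
  proof -
    have "?K = V \<inter> {x. f x = 0}" by blast
    then show ?thesis using subspace_inter[OF V f.subspace_kernel] by simp
  qed
  obtain B0 where B0: "finite B0" "B0 \<subseteq> ?K" "independent B0" "span B0 = ?K" "card B0 = dim ?K"
    using basis_subspace_exists[OF sK] by blast
  obtain B where B: "B0 \<subseteq> B" "B \<subseteq> V" "independent B" "V \<subseteq> span B"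
  proof (rule maximal_independent_subset_extend[of B0 V])
    show "B0 \<subseteq> V" using B0(2) by blast
    show "independent B0" by (rule B0(3))
  qed
  have fB: "finite B" by (rule finiteI_independent[OF B(3)])
  let ?C = "B - B0"
  have iC: "independent ?C" by (rule independent_mono[OF B(3)]) blast
  have spB: "span B = V" by (rule span_subspace[OF B(2) B(4) V])
  have dV: "dim V = card B" using basis_card_eq_dim[OF B(2) B(4) B(3)] by simp
  have cB: "card B = card B0 + card ?C"
  proof -
    have "card ?C = card B - card B0" by (rule card_Diff_subset[OF B0(1) B(1)])
    moreover have "card B0 \<le> card B" by (rule card_mono[OF fB B(1)])
    ultimately show ?thesis by arith
  qed
  have dC: "dim (span ?C) = card ?C" by (rule dim_span_eq_card_independent[OF iC])
  have sC: "span ?C \<subseteq> V" by (rule span_minimal[OF _ V]) (use B(2) in blast)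
  have sum: "{x + y |x y. x \<in> ?K \<and> y \<in> span ?C} = V"
  proof
    show "{x + y |x y. x \<in> ?K \<and> y \<in> span ?C} \<subseteq> V"
    proof
      fix z assume "z \<in> {x + y |x y. x \<in> ?K \<and> y \<in> span ?C}"
      then obtain x y where "z = x + y" "x \<in> V" "y \<in> span ?C" by blast
      then show "z \<in> V" using sC V subspace_add by blast
    qed
    show "V \<subseteq> {x + y |x y. x \<in> ?K \<and> y \<in> span ?C}"
    proof -
      have "B = B0 \<union> ?C" using B(1) by blast
      then have "span B = {x + y |x y. x \<in> span B0 \<and> y \<in> span ?C}" by (metis span_Un)
      then show ?thesis using spB B0(4) by simp
    qed
  qed
  have "dim {x + y |x y. x \<in> ?K \<and> y \<in> span ?C} + dim (?K \<inter> span ?C) = dim ?K + dim (span ?C)"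
    by (rule dim_sums_Int[OF sK subspace_span])
  then have "dim (?K \<inter> span ?C) = 0" using sum dV cB dC B0(5) by simp
  then have Z: "?K \<inter> span ?C \<subseteq> {0}" by simp
  have inj: "inj_on f (span (span ?C))"
  proof -
    have "inj_on f (span ?C)"
      using Z by (subst f.inj_on_iff_eq_0[OF subspace_span]) (use sC in auto)
    then show ?thesis by (simp add: span_span)
  qed
  have "dim (f ` span ?C) = dim (span ?C)"
    by (rule p.dim_image_eq[OF _ inj]) (use f.module_hom_axioms in \<open>simp add: module_hom_iff_linear\<close>)
  moreover have "f ` V = f ` span ?C"
  proof
    show "f ` span ?C \<subseteq> f ` V" using sC by auto
    show "f ` V \<subseteq> f ` span ?C"
    proof
      fix z assume "z \<in> f ` V"
      then obtain v where v: "v \<in> V" "z = f v" by auto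
      then obtain x y where "v = x + y" "x \<in> ?K" "y \<in> span ?C" using sum by blast
      then have "f v = f y" by (simp add: f.add)
      then show "z \<in> f ` span ?C" using v \<open>y \<in> span ?C\<close> by auto
    qed
  qed
  ultimately show ?thesis using dV cB dC B0(5) by simp
qed

lemma lann_step:
  assumes "finite T" "T \<subseteq> I"
  shows "dim (lann S) \<le> dim (lann (S \<union> T)) + n * card T"
  using assms
proof (induction T rule: finite_induct)
  case empty
  then show ?case by simp
next
  case (insert v T)
  have vI: "v \<in> I" and TI: "T \<subseteq> I" using insert.prems by auto
  have L: "lann (S \<union> insert v T) = {a \<in> lann (S \<union> T). a * v = 0}"
    by (auto simp: lann_def)
  have R: "dim (lann (S \<union> T)) = dim {a \<in> lann (S \<union> T). a * v = 0} + dim ((\<lambda>a. a * v) ` lann (S \<union> T))"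
    by (rule RN[OF subspace_lann hom_right])
  have "(\<lambda>a. a * v) ` lann (S \<union> T) \<subseteq> I" using vI I_mult by auto
  then have "dim ((\<lambda>a. a * v) ` lann (S \<union> T)) \<le> n" using dim_subset dimI by metis
  then have "dim (lann (S \<union> T)) \<le> dim (lann (S \<union> insert v T)) + n" using R L by simp
  moreover have "dim (lann S) \<le> dim (lann (S \<union> T)) + n * card T" using insert.IH TI by blast
  moreover have "card (insert v T) = card T + 1" using insert.hyps by simp
  ultimately show ?case by (simp add: algebra_simps)
qed

lemma lann_empty: "lann {} = UNIV"
  by (simp add: lann_def)

lemma lann_lower:
  assumes "finite S" "S \<subseteq> I"
  shows "n^2 \<le> dim (lann S) + n * card S"
  using lann_step[OF assms, of "{}"] dimA by (simp add: lann_empty)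

lemma lann_indep:
  assumes S: "independent S" "S \<subseteq> I"
  shows "dim (lann S) + n * card S = n^2"
proof -
  have fS: "finite S" by (rule finiteI_independent[OF S(1)])
  obtain B where B: "S \<subseteq> B" "B \<subseteq> I" "independent B" "I \<subseteq> span B"
    by (rule maximal_independent_subset_extend[OF S(2) S(1)])
  have fB: "finite B" by (rule finiteI_independent[OF B(3)])
  have cB: "card B = n" using basis_card_eq_dim[OF B(2) B(4) B(3)] dimI by simp
  have "lann B \<subseteq> {0}"
  proof -
    have "lann B = lann (span B)" by (simp add: lann_span)
    also have "\<dots> \<subseteq> lann I" by (rule lann_anti[OF B(4)])
    finally show ?thesis using lann_I by simp
  qed
  then have d0: "dim (lann B) = 0" by (metis dim_eq_0)
  have "S \<union> (B - S) = B" using B(1) by blast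
  moreover have "dim (lann S) \<le> dim (lann (S \<union> (B - S))) + n * card (B - S)"
    by (rule lann_step) (use fB B in auto)
  ultimately have up: "dim (lann S) \<le> n * card (B - S)" using d0 by simp
  have cS: "card S \<le> n" using card_mono[OF fB B(1)] cB by simp
  have cD: "card (B - S) = n - card S" using card_Diff_subset[OF fS B(1)] cB by simp
  obtain m where m: "n = card S + m" using cS le_iff_add by blast
  have lo: "n^2 \<le> dim (lann S) + n * card S" by (rule lann_lower[OF fS S(2)])
  have "n^2 = n * m + n * card S" using m by (simp add: power2_eq_square algebra_simps)
  moreover have "card (B - S) = m" using cD m by simp
  then have "dim (lann S) \<le> n * m" using up by simp
  ultimately show ?thesis using lo by linarith
qed

lemma lann_subspace_dim:
  assumes W: "subspace W" "W \<subseteq> I"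
  shows "dim (lann W) + n * dim W = n^2"
proof -
  obtain B where B: "finite B" "B \<subseteq> W" "independent B" "span B = W" "card B = dim W"
    using basis_subspace_exists[OF W(1)] by blast
  have "lann W = lann B" using B(4) lann_span by metis
  then show ?thesis using lann_indep[OF B(3)] B W(2) by simp
qed

lemma density_aux:
  assumes "finite S"
  shows "independent S \<longrightarrow> S \<subseteq> I \<longrightarrow> (\<forall>s\<in>S. g s \<in> I) \<longrightarrow> (\<exists>a. \<forall>s\<in>S. a * s = g s)"
  using assms
proof (induction S rule: finite_induct)
  case empty
  then show ?case by simp
next
  case (insert v S)
  show ?case
  proof (intro impI)
    assume ind: "independent (insert v S)" and sub: "insert v S \<subseteq> I"
      and gI: "\<forall>s\<in>insert v S. g s \<in> I"
    have indS: "independent S" using ind independent_mono by blast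
    then obtain a0 where a0: "\<forall>s\<in>S. a0 * s = g s" using insert.IH sub gI by blast
    have vI: "v \<in> I" using sub by simp
    let ?V = "lann S"
    have R: "dim ?V = dim {a \<in> ?V. a * v = 0} + dim ((\<lambda>a. a * v) ` ?V)"
      by (rule RN[OF subspace_lann hom_right])
    have L: "{a \<in> ?V. a * v = 0} = lann (insert v S)" by (auto simp: lann_def)
    have d1: "dim ?V + n * card S = n^2" by (rule lann_indep[OF indS]) (use sub in simp)
    have d2: "dim (lann (insert v S)) + n * card (insert v S) = n^2" by (rule lann_indep[OF ind sub])
    have "card (insert v S) = card S + 1" using insert.hyps by simp
    then have dimg: "dim ((\<lambda>a. a * v) ` ?V) = n" using R L d1 d2 by (simp add: algebra_simps)
    interpret h: module_hom sc sc "\<lambda>a. a * v" by (rule hom_right)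
    have sg: "subspace ((\<lambda>a. a * v) ` ?V)" by (rule h.subspace_image[OF subspace_lann])
    have gsub: "(\<lambda>a. a * v) ` ?V \<subseteq> I" using vI I_mult by auto
    have eq: "(\<lambda>a. a * v) ` ?V = I"
      by (rule subspace_dim_equal[OF sg I_sub gsub]) (simp add: dimg dimI)
    have "g v - a0 * v \<in> I" using gI vI I_mult I_sub subspace_diff by auto
    then obtain b where b: "b \<in> ?V" "b * v = g v - a0 * v" using eq by (metis imageE)
    have "\<forall>s\<in>insert v S. (a0 + b) * s = g s"
    proof
      fix s assume s: "s \<in> insert v S"
      show "(a0 + b) * s = g s"
      proof (cases "s = v")
        case True
        then show ?thesis using b by (simp add: distrib_right)
      next
        case False
        then have "s \<in> S" using s by simp
        then show ?thesis using a0 b(1) by (simp add: distrib_right lann_def)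
      qed
    qed
    then show "\<exists>a. \<forall>s\<in>insert v S. a * s = g s" by blast
  qed
qed

lemma density:
  assumes "independent S" "S \<subseteq> I" "\<And>s. s \<in> S \<Longrightarrow> g s \<in> I"
  shows "\<exists>a. \<forall>s\<in>S. a * s = g s"
  using density_aux[OF finiteI_independent[OF assms(1)], of g] assms by blast

lemma rann_lann:
  assumes W: "subspace W" "W \<subseteq> I"
  shows "rann (lann W) \<inter> I = W"
proof -
  let ?W = "rann (lann W) \<inter> I"
  have sub: "W \<subseteq> ?W" using W(2) by (auto simp: rann_def lann_def)
  have sW: "subspace ?W" by (rule subspace_inter[OF subspace_rann I_sub])
  have "lann ?W = lann W"
  proof
    show "lann ?W \<subseteq> lann W" by (rule lann_anti[OF sub])
    show "lann W \<subseteq> lann ?W" by (auto simp: lann_def rann_def)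
  qed
  then have "n * dim ?W = n * dim W"
  proof -
    have "dim (lann ?W) + n * dim ?W = n^2" by (rule lann_subspace_dim[OF sW]) blast
    then have "dim (lann W) + n * dim ?W = n^2" using \<open>lann ?W = lann W\<close> by simp
    then show ?thesis using lann_subspace_dim[OF W] by linarith
  qed
  then have "dim ?W = dim W" using n_pos by simp
  then have "W = ?W" by (intro subspace_dim_equal[OF W(1) sW sub]) simp
  then show ?thesis by simp
qed

lemma indep_single: "w \<noteq> 0 \<Longrightarrow> independent {w}"
  by (rule independent_insertI) (auto simp: span_empty independent_empty)

lemma idem: "\<exists>e\<in>I. \<forall>y\<in>I. y * e = y"
proof -
  obtain z x where zx: "z \<in> I" "x \<in> I" "x * z \<noteq> 0"
  proof (rule ccontr)
    assume "\<not> thesis"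
    then have "\<forall>z\<in>I. \<forall>x\<in>I. x * z = 0" using that by blast
    then have "I \<subseteq> lann I" by (auto simp: lann_def)
    then have "I \<subseteq> {0}" using lann_I by simp
    then have "dim I = 0" by (metis dim_eq_0)
    then show False using dimI n_pos by simp
  qed
  let ?K = "{y \<in> I. y * z = 0}"
  have K0: "?K \<subseteq> {0}"
  proof
    fix w assume w: "w \<in> ?K"
    show "w \<in> {0}"
    proof (rule ccontr)
      assume "w \<notin> {0}"
      then have "independent {w}" by (intro indep_single) simp
      then obtain a where "\<forall>s\<in>{w}. a * s = x"
        using density[of "{w}" "\<lambda>_. x"] w zx by auto
      then have "a * w = x" by simp
      then have "x * z = a * (w * z)" by (simp add: mult.assoc[symmetric])
      then show False using w zx by simp
    qed
  qed
  then have "dim ?K = 0" by (metis dim_eq_0)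
  moreover have "dim I = dim ?K + dim ((\<lambda>y. y * z) ` I)"
    by (rule RN[OF I_sub hom_right])
  ultimately have dimg: "dim ((\<lambda>y. y * z) ` I) = n" using dimI by simp
  interpret h: module_hom sc sc "\<lambda>y. y * z" by (rule hom_right)
  have sg: "subspace ((\<lambda>y. y * z) ` I)" by (rule h.subspace_image[OF I_sub])
  have gsub: "(\<lambda>y. y * z) ` I \<subseteq> I" using zx(1) I_mult by auto
  have eq: "(\<lambda>y. y * z) ` I = I"
    by (rule subspace_dim_equal[OF sg I_sub gsub]) (simp add: dimg dimI)
  then obtain e where e: "e \<in> I" "e * z = z" using zx(1) by (metis imageE)
  have "\<forall>y\<in>I. y * e = y"
  proof
    fix y assume y: "y \<in> I"
    have "y * e - y \<in> I" using I_mult[OF e(1)] y I_sub subspace_diff by blast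
    moreover have "(y * e - y) * z = 0" using e(2) by (simp add: left_diff_distrib mult.assoc)
    ultimately have "y * e - y \<in> {0}" using K0 by blast
    then show "y * e = y" by simp
  qed
  then show ?thesis using e(1) by blast
qed

lemma sprod_rann: "sprod sc (rann J) I = rann J \<inter> I"
proof
  show "sprod sc (rann J) I \<subseteq> rann J \<inter> I"
    unfolding sprod_def
  proof (rule span_minimal)
    show "subspace (rann J \<inter> I)" by (rule subspace_inter[OF subspace_rann I_sub])
    show "{u * w |u w. u \<in> rann J \<and> w \<in> I} \<subseteq> rann J \<inter> I"
      using I_mult by (auto simp: rann_def mult.assoc[symmetric])
  qed
  show "rann J \<inter> I \<subseteq> sprod sc (rann J) I"
  proof
    fix y assume y: "y \<in> rann J \<inter> I"
    obtain e where e: "e \<in> I" "\<forall>y\<in>I. y * e = y" using idem by blast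
    have "y = y * e" using e y by simp
    then have "y \<in> {u * w |u w. u \<in> rann J \<and> w \<in> I}" using y e(1) by blast
    then show "y \<in> sprod sc (rann J) I" unfolding sprod_def by (rule span_base)
  qed
qed

lemma kern_sub: "subspace {v \<in> I. x * v = 0}"
proof -
  interpret h: module_hom sc sc "\<lambda>v. x * v" by (rule hom_left)
  have "{v \<in> I. x * v = 0} = I \<inter> {v. x * v = 0}" by blast
  then show ?thesis using subspace_inter[OF I_sub h.subspace_kernel] by simp
qed

lemma kern_improve:
  assumes J: "left_ideal J" and x: "x \<in> J" and y: "y \<in> J"
    and v: "v \<in> I" "x * v = 0" "y * v \<noteq> 0"
  shows "\<exists>x'\<in>J. {u \<in> I. x' * u = 0} \<subset> {u \<in> I. x * u = 0}"
proof -
  let ?K = "{u \<in> I. x * u = 0}"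
  have RNx: "dim I = dim ?K + dim ((\<lambda>u. x * u) ` I)" by (rule RN[OF I_sub hom_left])
  have "v \<noteq> 0" using v by auto
  then have "dim {v} = 1" by simp
  moreover have "dim {v} \<le> dim ?K" by (rule dim_subset) (use v in auto)
  ultimately have "dim ((\<lambda>u. x * u) ` I) < n" using RNx dimI by linarith
  then have "(\<lambda>u. x * u) ` I \<noteq> I" using dimI by auto
  moreover have xIsub: "(\<lambda>u. x * u) ` I \<subseteq> I" using I_mult by auto
  ultimately obtain t where t: "t \<in> I" "t \<notin> (\<lambda>u. x * u) ` I" by blast
  interpret hx: module_hom sc sc "\<lambda>u. x * u" by (rule hom_left)
  have sxI: "subspace ((\<lambda>u. x * u) ` I)" by (rule hx.subspace_image[OF I_sub])
  let ?yv = "y * v"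
  have yvI: "?yv \<in> I" using I_mult v(1) by simp
  have "independent {?yv}" by (rule indep_single[OF v(3)])
  then obtain B where B: "{?yv} \<subseteq> B" "B \<subseteq> I" "independent B" "I \<subseteq> span B"
    using maximal_independent_subset_extend[of "{?yv}" I] yvI by blast
  have "\<exists>h. \<forall>b\<in>B. h * b = (if b = ?yv then t else 0)"
    by (rule density[OF B(3) B(2)]) (use t(1) subspace_0[OF I_sub] in auto)
  then obtain h where h: "\<forall>b\<in>B. h * b = (if b = ?yv then t else 0)" by blast
  interpret hh: module_hom sc sc "\<lambda>z. h * z" by (rule hom_left)
  have P: "span B \<subseteq> {z. h * z \<in> span {t}}"
  proof (rule span_minimal)
    have "{z. h * z \<in> span {t}} = (\<lambda>z. h * z) -` span {t}" by auto
    then show "subspace {z. h * z \<in> span {t}}" using hh.subspace_vimage[OF subspace_span] by simp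
    show "B \<subseteq> {z. h * z \<in> span {t}}" using h by (auto simp: span_base span_zero)
  qed
  let ?x' = "x + h * y"
  have x'J: "?x' \<in> J" using J x y unfolding left_ideal_def by blast
  have mul: "\<And>u. ?x' * u = x * u + h * (y * u)" by (simp add: distrib_right mult.assoc)
  have sub1: "{u \<in> I. ?x' * u = 0} \<subseteq> ?K"
  proof
    fix u assume u: "u \<in> {u \<in> I. ?x' * u = 0}"
    then have uI: "u \<in> I" and e: "x * u + h * (y * u) = 0" using mul by auto
    have "y * u \<in> span B" using B(4) I_mult[OF uI] by blast
    then have "h * (y * u) \<in> span {t}" using P by blast
    then obtain c where c: "h * (y * u) = sc c t" by (auto simp: span_singleton)
    show "u \<in> ?K"
    proof (cases "c = 0")
      case True
      then show ?thesis using e c uI by simp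
    next
      case False
      have "sc c t = - (x * u)" using e c by (simp add: eq_neg_iff_add_eq_0 add.commute)
      also have "\<dots> = x * (- u)" by simp
      finally have "sc c t \<in> (\<lambda>u. x * u) ` I" using subspace_neg[OF I_sub uI] by blast
      then have "sc (inverse c) (sc c t) \<in> (\<lambda>u. x * u) ` I" by (rule subspace_scale[OF sxI])
      then have "t \<in> (\<lambda>u. x * u) ` I" using False by simp
      then show ?thesis using t by blast
    qed
  qed
  have "?yv \<in> B" using B(1) by simp
  then have "h * ?yv = t" using h by simp
  then have "?x' * v = t" using mul v by simp
  moreover have "t \<noteq> 0" using t subspace_0[OF sxI] by auto
  ultimately have "v \<notin> {u \<in> I. ?x' * u = 0}" by simp
  moreover have "v \<in> ?K" using v by simp
  ultimately have "{u \<in> I. ?x' * u = 0} \<subset> ?K" using sub1 by blast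
  then show ?thesis using x'J by blast
qed

lemma lann_rann:
  assumes J: "left_ideal J"
  shows "lann (rann J \<inter> I) = J"
proof -
  let ?W = "rann J \<inter> I"
  have sW: "subspace ?W" by (rule subspace_inter[OF subspace_rann I_sub])
  have sJ: "subspace J" by (rule left_ideal_subspace[OF J])
  have Jsub: "J \<subseteq> lann ?W" by (auto simp: lann_def rann_def)
  have "0 \<in> J" using J by (simp add: left_ideal_def)
  then obtain x where x: "x \<in> J"
    and xmin: "\<forall>x'. x' \<in> J \<longrightarrow> dim {u \<in> I. x * u = 0} \<le> dim {u \<in> I. x' * u = 0}"
    using ex_has_least_nat[of "\<lambda>x. x \<in> J" 0 "\<lambda>x. dim {u \<in> I. x * u = 0}"] by blast
  let ?K = "{u \<in> I. x * u = 0}"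
  have KW: "?K = ?W"
  proof
    show "?W \<subseteq> ?K" using x by (auto simp: rann_def)
    show "?K \<subseteq> ?W"
    proof
      fix v assume v: "v \<in> ?K"
      show "v \<in> ?W"
      proof (rule ccontr)
        assume "v \<notin> ?W"
        then obtain y where y: "y \<in> J" "y * v \<noteq> 0" using v by (auto simp: rann_def)
        obtain x' where x': "x' \<in> J" "{u \<in> I. x' * u = 0} \<subset> ?K"
          using kern_improve[OF J x y(1), of v] v y(2) by auto
        have "span {u \<in> I. x' * u = 0} \<subset> span ?K"
          using x'(2) kern_sub span_eq_iff by metis
        then have "dim {u \<in> I. x' * u = 0} < dim ?K" by (rule dim_psubset)
        then show False using xmin x'(1) by fastforce
      qed
    qed
  qed
  have RNx: "dim I = dim ?K + dim ((\<lambda>u. x * u) ` I)" by (rule RN[OF I_sub hom_left])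
  interpret hx: module_hom sc sc "\<lambda>u. x * u" by (rule hom_left)
  have sxI: "subspace ((\<lambda>u. x * u) ` I)" by (rule hx.subspace_image[OF I_sub])
  have xIsub: "(\<lambda>u. x * u) ` I \<subseteq> I" using I_mult by auto
  have RNa: "dim (UNIV::'a set) = dim {a \<in> UNIV. a * x = 0} + dim ((\<lambda>a. a * x) ` UNIV)"
    by (rule RN[OF subspace_UNIV hom_right])
  have ker: "{a \<in> UNIV. a * x = 0} = lann ((\<lambda>u. x * u) ` I)"
  proof
    show "{a \<in> UNIV. a * x = 0} \<subseteq> lann ((\<lambda>u. x * u) ` I)"
      by (auto simp: lann_def mult.assoc[symmetric])
    show "lann ((\<lambda>u. x * u) ` I) \<subseteq> {a \<in> UNIV. a * x = 0}"
    proof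
      fix a assume "a \<in> lann ((\<lambda>u. x * u) ` I)"
      then have "a * x \<in> lann I" by (auto simp: lann_def mult.assoc)
      then show "a \<in> {a \<in> UNIV. a * x = 0}" using lann_I by simp
    qed
  qed
  have d1: "dim (lann ((\<lambda>u. x * u) ` I)) + n * dim ((\<lambda>u. x * u) ` I) = n^2"
    by (rule lann_subspace_dim[OF sxI xIsub])
  have rJ: "(\<lambda>a. a * x) ` UNIV \<subseteq> J" using J x unfolding left_ideal_def by blast
  have "dim ((\<lambda>a. a * x) ` UNIV) \<le> dim J" by (rule dim_subset[OF rJ])
  then have lb: "n * dim ((\<lambda>u. x * u) ` I) \<le> dim J" using RNa ker d1 dimA by simp
  have d2: "dim (lann ?W) + n * dim ?W = n^2" by (rule lann_subspace_dim[OF sW]) blast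
  have "n * dim I = n * dim ?W + n * dim ((\<lambda>u. x * u) ` I)" using RNx KW by (simp add: algebra_simps)
  then have "n^2 = n * dim ?W + n * dim ((\<lambda>u. x * u) ` I)" using dimI by (simp add: power2_eq_square)
  then have "dim (lann ?W) \<le> dim J" using d2 lb by linarith
  then have "J = lann ?W" by (rule subspace_dim_equal[OF sJ subspace_lann Jsub])
  then show ?thesis by simp
qed

end

lemma int_aux1:
  fixes d w n :: nat and j :: int
  assumes "d + n * w = n^2" "int d = int n * j" "n > 0"
  shows "int w = int n - j"
proof -
  have "int d + int n * int w = int n * int n" using assms(1)
    by (metis of_nat_add of_nat_mult power2_eq_square)
  then have "int n * int w = int n * (int n - j)" using assms(2) by (simp add: algebra_simps)
  then show ?thesis using assms(3) by simp
qed

lemma int_aux2: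
  fixes d w n :: nat and j :: int
  assumes "d + n * w = n^2" "int w = int n - j"
  shows "int d = int n * j"
proof -
  have "int d + int n * int w = int n * int n" using assms(1)
    by (metis of_nat_add of_nat_mult power2_eq_square)
  then show ?thesis using assms(2) by (simp add: algebra_simps)
qed

theorem proposition4p14:
  fixes sc :: "'k::field \<Rightarrow> 'a::ring_1 \<Rightarrow> 'a" and n :: nat and I :: "'a set" and j :: int
  assumes "csa_of_degree sc n"
    and "left_ideal I" and "vector_space.dim sc I = n"
  shows "bij_betw (\<lambda>J. sprod sc (rann J) I)
           {J. left_ideal J \<and> I \<subseteq> J \<and> int (vector_space.dim sc J) = int n * j}
           {W. module.subspace sc W \<and> W \<subseteq> sprod sc (rann I) I \<and> int (vector_space.dim sc W) = int n - j}
       \<and> (\<forall>W. module.subspace sc W \<and> W \<subseteq> sprod sc (rann I) I \<and> int (vector_space.dim sc W) = int n - j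
            \<longrightarrow> left_ideal (lann (sprod sc W UNIV)) \<and> I \<subseteq> lann (sprod sc W UNIV)
                \<and> int (vector_space.dim sc (lann (sprod sc W UNIV))) = int n * j
                \<and> sprod sc (rann (lann (sprod sc W UNIV))) I = W)"
proof -
  have VS: "vector_space sc" and scL: "\<And>c x y. sc c (x * y) = sc c x * y"
    and scR: "\<And>c x y. sc c (x * y) = x * sc c y"
    and simple: "\<And>J::'a set. two_sided_ideal J \<Longrightarrow> J = {0} \<or> J = UNIV"
    and dA: "vector_space.dim sc (UNIV::'a set) = n^2"
    and fd: "\<exists>B. finite B \<and> module.span sc B = UNIV"
    using assms(1) unfolding csa_of_degree_def k_algebra_def simple_alg_def fin_dim_alg_def by auto
  interpret V: vector_space sc by (rule VS)
  obtain B0 where B0: "finite B0" "V.span B0 = UNIV" using fd by blast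
  obtain B where B: "B \<subseteq> B0" "V.independent B" "B0 \<subseteq> V.span B"
    using V.maximal_independent_subset[of B0] by blast
  have fB: "finite B" using B(1) B0(1) finite_subset by blast
  have sB: "V.span B = UNIV"
    using B(3) B0(2) V.span_mono[OF B(3)] V.span_span by (metis top.extremum_uniqueI)
  interpret C: csa_ctx sc B n I
    by unfold_locales (use fB B(2) sB scL scR simple dA assms(2,3) in auto)
  let ?S = "{J. left_ideal J \<and> I \<subseteq> J \<and> int (vector_space.dim sc J) = int n * j}"
  let ?T = "{W. module.subspace sc W \<and> W \<subseteq> sprod sc (rann I) I \<and> int (vector_space.dim sc W) = int n - j}"
  have spI: "sprod sc (rann I) I = rann I \<inter> I" by (rule C.sprod_rann)
  have lannW: "lann (sprod sc W UNIV) = lann W" for W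
  proof -
    have "lann (sprod sc W UNIV) = lann {u * w |u w. u \<in> W \<and> w \<in> UNIV}"
      unfolding sprod_def by (rule C.lann_span)
    also have "\<dots> = lann W"
    proof
      show "lann {u * w |u w. u \<in> W \<and> w \<in> UNIV} \<subseteq> lann W"
      proof
        fix a assume a: "a \<in> lann {u * w |u w. u \<in> W \<and> w \<in> UNIV}"
        have "\<forall>u\<in>W. a * u = 0"
        proof
          fix u assume "u \<in> W"
          then have "u * 1 \<in> {u * w |u w. u \<in> W \<and> w \<in> UNIV}" by blast
          then show "a * u = 0" using a by (auto simp: lann_def)
        qed
        then show "a \<in> lann W" by (simp add: lann_def)
      qed
      show "lann W \<subseteq> lann {u * w |u w. u \<in> W \<and> w \<in> UNIV}"
        by (auto simp: lann_def mult.assoc[symmetric])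
    qed
    finally show ?thesis .
  qed
  have bk: "left_ideal (lann (sprod sc W UNIV)) \<and> I \<subseteq> lann (sprod sc W UNIV)
                \<and> int (vector_space.dim sc (lann (sprod sc W UNIV))) = int n * j
                \<and> sprod sc (rann (lann (sprod sc W UNIV))) I = W" if WT: "W \<in> ?T" for W
  proof -
    have sW: "module.subspace sc W" and WI: "W \<subseteq> rann I \<inter> I" and dW: "int (vector_space.dim sc W) = int n - j"
      using WT spI by auto
    have "left_ideal (lann W)" by (rule C.lann_left_ideal)
    moreover have "I \<subseteq> lann W" using WI by (auto simp: lann_def rann_def)
    moreover have "int (vector_space.dim sc (lann W)) = int n * j"
      using int_aux2[OF C.lann_subspace_dim[OF sW] dW] WI by auto
    moreover have "sprod sc (rann (lann W)) I = W"
      using C.sprod_rann C.rann_lann[OF sW] WI by auto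
    ultimately show ?thesis using lannW by simp
  qed
  have fwd: "sprod sc (rann J) I \<in> ?T \<and> lann (sprod sc (rann J) I) = J" if JS: "J \<in> ?S" for J
  proof -
    have LJ: "left_ideal J" and IJ: "I \<subseteq> J" and dJ: "int (vector_space.dim sc J) = int n * j" using JS by auto
    have eq: "sprod sc (rann J) I = rann J \<inter> I" by (rule C.sprod_rann)
    have sW: "module.subspace sc (rann J \<inter> I)" by (rule V.subspace_inter[OF C.subspace_rann C.I_sub])
    have L: "lann (rann J \<inter> I) = J" by (rule C.lann_rann[OF LJ])
    have "vector_space.dim sc (lann (rann J \<inter> I)) + n * vector_space.dim sc (rann J \<inter> I) = n^2"
      by (rule C.lann_subspace_dim[OF sW]) blast
    then have "int (vector_space.dim sc (rann J \<inter> I)) = int n - j"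
      using int_aux1[OF _ dJ C.n_pos] L by simp
    moreover have "rann J \<inter> I \<subseteq> rann I \<inter> I" using IJ by (auto simp: rann_def)
    ultimately show ?thesis using eq sW spI L by auto
  qed
  have "bij_betw (\<lambda>J. sprod sc (rann J) I) ?S ?T"
  proof (rule bij_betw_imageI)
    show "inj_on (\<lambda>J. sprod sc (rann J) I) ?S"
    proof (rule inj_onI)
      fix J1 J2 assume "J1 \<in> ?S" "J2 \<in> ?S" "sprod sc (rann J1) I = sprod sc (rann J2) I"
      then show "J1 = J2" using fwd by metis
    qed
    show "(\<lambda>J. sprod sc (rann J) I) ` ?S = ?T"
    proof
      show "(\<lambda>J. sprod sc (rann J) I) ` ?S \<subseteq> ?T" using fwd by blast
      show "?T \<subseteq> (\<lambda>J. sprod sc (rann J) I) ` ?S"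
      proof
        fix W assume W: "W \<in> ?T"
        have "lann (sprod sc W UNIV) \<in> ?S" using bk[OF W] by simp
        moreover have "W = sprod sc (rann (lann (sprod sc W UNIV))) I" using bk[OF W] by simp
        ultimately show "W \<in> (\<lambda>J. sprod sc (rann J) I) ` ?S" by blast
      qed
    qed
  qed
  moreover have "\<forall>W. W \<in> ?T \<longrightarrow> left_ideal (lann (sprod sc W UNIV)) \<and> I \<subseteq> lann (sprod sc W UNIV)
                \<and> int (vector_space.dim sc (lann (sprod sc W UNIV))) = int n * j
                \<and> sprod sc (rann (lann (sprod sc W UNIV))) I = W"
    using bk by blast
  ultimately show ?thesis by simp
qed

end
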